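(* Suppose the Assumption below holds. Then there exists a constant $\gamma_h\ge0$ such that $\sup_{\mathbf x\in\Omega}\|\mathcal H(\mathbf x)\|\le\gamma_h$.
   Context: Let $f,c_1,\dots,c_m:\mathbb R^n\to\mathbb R$ be twice continuously differentiable and $\Omega=\{\mathbf x\in\mathbb R^n: c_i(\mathbf x)=0,\ i=1,\dots,m\}$. Write $\nabla\mathbf c(\mathbf x)=[\nabla c_1(\mathbf x),\dots,\nabla c_m(\mathbf x)]$; $\mathcal P_{\mathbf x}$ is the orthogonal projection onto $\{\mathbf v:\nabla\mathbf c(\mathbf x)^\top\mathbf v=\mathbf 0\}$. Lagrangian $\mathcal L(\mathbf x,\boldsymbol\lambda)=f(\mathbf x)-\sum_i\lambda_ic_i(\mathbf x)$; $\boldsymbol\lambda^\star(\mathbf x)\in\arg\min_{\boldsymbol\lambda}\|\nabla_{\mathbf x}\mathcal L(\mathbf x,\boldsymbol\lambda)\|$; $\mathcal H(\mathbf x)=\mathcal P_{\mathbf x}^\top\nabla^2_{\mathbf x\mathbf x}\mathcal L(\mathbf x,\boldsymbol\lambda^\star(\mathbf x))\mathcal P_{\mathbf x}$. Matrix norms are spectral. Assumption: (a) $\nabla f,\nabla^2 f,\nabla c_i,\nabla^2 c_i$ are Lipschitz over $\Omega$; (b) $\sup_{\Omega}\|\nabla f\|\le\gamma_{f,1}$, $\sup_\Omega\|\nabla^2 f\|\le\gamma_{f,2}$, $\sup_\Omega\|\nabla c_i\|\le\gamma_{c_i,1}$, $\sup_\Omega\|\nabla^2c_i\|\le\gamma_{c_i,2}$;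 (c) there is $\sigma_0>0$ with $\sigma_{\min}(\nabla\mathbf c(\mathbf x))\ge\sigma_0$ on $\Omega$. *)

theory Defs
  imports "HOL-Analysis.Analysis"
begin

definition specnorm :: "real^'n^'m \<Rightarrow> real" where
  "specnorm A = onorm (\<lambda>v. A *v v)"

definition sigma_min :: "real^'m^'n \<Rightarrow> real" where
  "sigma_min A = Inf {norm (A *v u) | u. norm u = 1}"

text \<open>Jacobian-type matrix whose columns are the constraint gradients.\<close>
definition cjac :: "('m \<Rightarrow> real^'n \<Rightarrow> real^'n) \<Rightarrow> real^'n \<Rightarrow> real^'m^'n" where
  "cjac gc x = (\<chi> j i. gc i x $ j)"

definition projP :: "('m::finite \<Rightarrow> real^'n \<Rightarrow> real^'n) \<Rightarrow> real^'n \<Rightarrow> real^'n^'n" where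
  "projP gc x = matrix (closest_point {v. transpose (cjac gc x) *v v = 0})"

definition lag_grad :: "(real^'n \<Rightarrow> real^'n) \<Rightarrow> ('m::finite \<Rightarrow> real^'n \<Rightarrow> real^'n)
    \<Rightarrow> real^'n \<Rightarrow> real^'m \<Rightarrow> real^'n" where
  "lag_grad gf gc x lam = gf x - (\<Sum>i\<in>UNIV. (lam $ i) *\<^sub>R gc i x)"

definition lag_hess :: "(real^'n \<Rightarrow> real^'n^'n) \<Rightarrow> ('m::finite \<Rightarrow> real^'n \<Rightarrow> real^'n^'n)
    \<Rightarrow> real^'n \<Rightarrow> real^'m \<Rightarrow> real^'n^'n" where
  "lag_hess Hf Hc x lam = Hf x - (\<Sum>i\<in>UNIV. (lam $ i) *\<^sub>R Hc i x)"

definition projH :: "(real^'n \<Rightarrow> real^'n^'n) \<Rightarrow> ('m::finite \<Rightarrow> real^'n \<Rightarrow> real^'n) \<Rightarrow> ('m \<Rightarrow> real^'n \<Rightarrow> real^'n^'n)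
    \<Rightarrow> (real^'n \<Rightarrow> real^'m) \<Rightarrow> real^'n \<Rightarrow> real^'n^'n" where
  "projH Hf gc Hc lam x =
     transpose (projP gc x) ** lag_hess Hf Hc x (lam x) ** projP gc x"

end

theory Submission
  imports Defs
begin

lemma entry_le_specnorm:
  fixes A :: "real^'n^'m"
  shows "\<bar>A $ i $ j\<bar> \<le> specnorm A"
  unfolding specnorm_def by (rule matrix_component_le_onorm)

lemma mult_entry_bound:
  fixes A :: "real^'k^'m" and B :: "real^'n^'k"
  assumes "\<And>i j. \<bar>A $ i $ j\<bar> \<le> a" "\<And>i j. \<bar>B $ i $ j\<bar> \<le> b"
  shows "\<bar>(A ** B) $ i $ j\<bar> \<le> real CARD('k) * (a * b)"
proof -
  have "\<bar>(A ** B) $ i $ j\<bar> = \<bar>\<Sum>k\<in>UNIV. A $ i $ k * B $ k $ j\<bar>"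
    by (simp add: matrix_matrix_mult_def)
  also have "\<dots> \<le> (\<Sum>k\<in>(UNIV::'k set). \<bar>A $ i $ k * B $ k $ j\<bar>)" by (rule sum_abs)
  also have "\<dots> \<le> (\<Sum>k\<in>(UNIV::'k set). a * b)"
  proof (rule sum_mono)
    fix k
    have "\<bar>A $ i $ k\<bar> * \<bar>B $ k $ j\<bar> \<le> a * b"
      using assms by (meson abs_ge_zero mult_mono order_trans)
    then show "\<bar>A $ i $ k * B $ k $ j\<bar> \<le> a * b" by (simp add: abs_mult)
  qed
  finally show ?thesis by simp
qed

lemma projP_entry:
  fixes gc :: "'m::finite \<Rightarrow> real^'n \<Rightarrow> real^'n"
  shows "\<bar>projP gc x $ i $ j\<bar> \<le> 2"
proof -
  define S where "S = {v. transpose (cjac gc x) *v v = 0}"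
  have cl: "closed S" unfolding S_def
    by (intro closed_Collect_eq continuous_intros)
  have z: "0 \<in> S" unfolding S_def by simp
  define b :: "real^'n" where "b = axis j 1"
  have d: "dist b (closest_point S b) \<le> dist b 0" by (rule closest_point_le[OF cl z])
  have "norm (closest_point S b) \<le> 2"
  proof -
    have nb: "norm b = 1" by (simp add: b_def)
    have "norm (closest_point S b) \<le> norm b + norm (closest_point S b - b)" by (rule norm_triangle_sub)
    moreover have "norm (closest_point S b - b) = dist b (closest_point S b)" by (simp add: dist_norm norm_minus_commute)
    ultimately show ?thesis using nb d by simp
  qed
  then have "\<bar>closest_point S b $ i\<bar> \<le> 2" using component_le_norm_cart order_trans by blast
  then show ?thesis unfolding projP_def S_def[symmetric] b_def by (simp add: matrix_def)
qed

lemma cjac_mult: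
  fixes gc :: "'m::finite \<Rightarrow> real^'n \<Rightarrow> real^'n"
  shows "cjac gc x *v u = (\<Sum>i\<in>UNIV. u $ i *\<^sub>R gc i x)"
  by (simp add: vec_eq_iff matrix_vector_mult_def cjac_def mult.commute sum_component)

lemma sigma_min_le:
  fixes A :: "real^'m^'n"
  assumes "norm u = 1"
  shows "sigma_min A \<le> norm (A *v u)"
  unfolding sigma_min_def
  by (rule cInf_lower) (use assms in \<open>auto intro: bdd_belowI[where m=0]\<close>)

lemma sigma_min_mult:
  fixes A :: "real^'m^'n"
  shows "sigma_min A * norm u \<le> norm (A *v u)"
proof (cases "u = 0")
  case True then show ?thesis by simp
next
  case False
  hence np: "norm u > 0" by simp
  have "sigma_min A \<le> norm (A *v (u /\<^sub>R norm u))"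
    by (rule sigma_min_le) (use np in simp)
  also have "\<dots> = norm (A *v u) / norm u"
    by (simp add: matrix_vector_mult_scaleR divide_inverse_commute)
  finally show ?thesis using np by (simp add: pos_le_divide_eq)
qed

theorem lemma3:
  fixes f :: "real^'n \<Rightarrow> real" and gf :: "real^'n \<Rightarrow> real^'n" and Hf :: "real^'n \<Rightarrow> real^'n^'n"
    and c :: "'m::finite \<Rightarrow> real^'n \<Rightarrow> real" and gc :: "'m \<Rightarrow> real^'n \<Rightarrow> real^'n"
    and Hc :: "'m \<Rightarrow> real^'n \<Rightarrow> real^'n^'n"
    and \<Omega> :: "(real^'n) set"
    and lam :: "real^'n \<Rightarrow> real^'m"
    and \<gamma>f1 \<gamma>f2 \<sigma>0 :: real and \<gamma>c1 \<gamma>c2 :: "'m \<Rightarrow> real"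
  assumes f_d1: "\<And>x. (f has_derivative (\<lambda>h. gf x \<bullet> h)) (at x)"
    and f_d2: "\<And>x. (gf has_derivative (\<lambda>h. Hf x *v h)) (at x)"
    and f_C2: "continuous_on UNIV Hf"
    and c_d1: "\<And>i x. (c i has_derivative (\<lambda>h. gc i x \<bullet> h)) (at x)"
    and c_d2: "\<And>i x. (gc i has_derivative (\<lambda>h. Hc i x *v h)) (at x)"
    and c_C2: "\<And>i. continuous_on UNIV (Hc i)"
    and Omega: "\<Omega> = {x. \<forall>i. c i x = 0}"
    and lam_min: "\<And>x \<mu>. x \<in> \<Omega> \<Longrightarrow> norm (lag_grad gf gc x (lam x)) \<le> norm (lag_grad gf gc x \<mu>)"
    and lip_gf: "\<exists>L. \<forall>x\<in>\<Omega>. \<forall>y\<in>\<Omega>. norm (gf x - gf y) \<le> L * norm (x - y)"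
    and lip_Hf: "\<exists>L. \<forall>x\<in>\<Omega>. \<forall>y\<in>\<Omega>. specnorm (Hf x - Hf y) \<le> L * norm (x - y)"
    and lip_gc: "\<And>i. \<exists>L. \<forall>x\<in>\<Omega>. \<forall>y\<in>\<Omega>. norm (gc i x - gc i y) \<le> L * norm (x - y)"
    and lip_Hc: "\<And>i. \<exists>L. \<forall>x\<in>\<Omega>. \<forall>y\<in>\<Omega>. specnorm (Hc i x - Hc i y) \<le> L * norm (x - y)"
    and bd_gf: "\<And>x. x \<in> \<Omega> \<Longrightarrow> norm (gf x) \<le> \<gamma>f1"
    and bd_Hf: "\<And>x. x \<in> \<Omega> \<Longrightarrow> specnorm (Hf x) \<le> \<gamma>f2"
    and bd_gc: "\<And>i x. x \<in> \<Omega> \<Longrightarrow> norm (gc i x) \<le> \<gamma>c1 i"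
    and bd_Hc: "\<And>i x. x \<in> \<Omega> \<Longrightarrow> specnorm (Hc i x) \<le> \<gamma>c2 i"
    and sig_pos: "\<sigma>0 > 0"
    and sig: "\<And>x. x \<in> \<Omega> \<Longrightarrow> sigma_min (cjac gc x) \<ge> \<sigma>0"
  shows "\<exists>\<gamma>h\<ge>0. \<forall>x\<in>\<Omega>. specnorm (projH Hf gc Hc lam x) \<le> \<gamma>h"
proof -
  define L where "L = 2 * \<bar>\<gamma>f1\<bar> / \<sigma>0"
  define hb where "hb = \<bar>\<gamma>f2\<bar> + (\<Sum>i\<in>(UNIV::'m set). L * \<bar>\<gamma>c2 i\<bar>)"
  define e1 where "e1 = real CARD('n) * (2 * hb)"
  define e2 where "e2 = real CARD('n) * (e1 * 2)"
  define G where "G = real CARD('n) * real CARD('n) * e2"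
  have lamb: "norm (lam x) \<le> L" if x: "x \<in> \<Omega>" for x
  proof -
    let ?J = "cjac gc x"
    have lg: "lag_grad gf gc x \<mu> = gf x - ?J *v \<mu>" for \<mu>
      by (simp add: lag_grad_def cjac_mult)
    have "norm (gf x - ?J *v lam x) \<le> norm (gf x)"
      using lam_min[OF x, of 0] by (simp add: lg)
    hence "norm (?J *v lam x) \<le> 2 * norm (gf x)"
      using norm_triangle_sub[of "?J *v lam x" "gf x"] norm_minus_commute[of "gf x" "?J *v lam x"] by linarith
    also have "\<dots> \<le> 2 * \<bar>\<gamma>f1\<bar>" using bd_gf[OF x] by simp
    finally have a: "norm (?J *v lam x) \<le> 2 * \<bar>\<gamma>f1\<bar>" .
    have "\<sigma>0 * norm (lam x) \<le> sigma_min ?J * norm (lam x)"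
      using sig[OF x] by (simp add: mult_right_mono)
    also have "\<dots> \<le> norm (?J *v lam x)" by (rule sigma_min_mult)
    finally have "\<sigma>0 * norm (lam x) \<le> 2 * \<bar>\<gamma>f1\<bar>" using a by linarith
    then show ?thesis unfolding L_def using sig_pos by (simp add: pos_le_divide_eq mult.commute)
  qed
  have hess: "\<bar>lag_hess Hf Hc x (lam x) $ i $ j\<bar> \<le> hb" if x: "x \<in> \<Omega>" for x i j
  proof -
    have "\<bar>lag_hess Hf Hc x (lam x) $ i $ j\<bar> = \<bar>Hf x $ i $ j - (\<Sum>k\<in>UNIV. lam x $ k * Hc k x $ i $ j)\<bar>"
      by (simp add: lag_hess_def sum_component)
    also have "\<dots> \<le> \<bar>Hf x $ i $ j\<bar> + \<bar>\<Sum>k\<in>UNIV. lam x $ k * Hc k x $ i $ j\<bar>" by (rule abs_triangle_ineq4)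
    also have "\<dots> \<le> \<bar>\<gamma>f2\<bar> + (\<Sum>k\<in>(UNIV::'m set). L * \<bar>\<gamma>c2 k\<bar>)"
    proof (rule add_mono)
      show "\<bar>Hf x $ i $ j\<bar> \<le> \<bar>\<gamma>f2\<bar>" using entry_le_specnorm[of "Hf x" i j] bd_Hf[OF x] by linarith
      have "\<bar>\<Sum>k\<in>UNIV. lam x $ k * Hc k x $ i $ j\<bar> \<le> (\<Sum>k\<in>(UNIV::'m set). \<bar>lam x $ k * Hc k x $ i $ j\<bar>)" by (rule sum_abs)
      also have "\<dots> \<le> (\<Sum>k\<in>(UNIV::'m set). L * \<bar>\<gamma>c2 k\<bar>)"
      proof (rule sum_mono)
        fix k
        have a: "\<bar>lam x $ k\<bar> \<le> L" using component_le_norm_cart[of "lam x" k] lamb[OF x] by linarith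
        have b: "\<bar>Hc k x $ i $ j\<bar> \<le> \<bar>\<gamma>c2 k\<bar>" using entry_le_specnorm[of "Hc k x" i j] bd_Hc[OF x, of k] by linarith
        show "\<bar>lam x $ k * Hc k x $ i $ j\<bar> \<le> L * \<bar>\<gamma>c2 k\<bar>"
          unfolding abs_mult by (rule mult_mono[OF a b]) (use a in auto)
      qed
      finally show "\<bar>\<Sum>k\<in>UNIV. lam x $ k * Hc k x $ i $ j\<bar> \<le> (\<Sum>k\<in>(UNIV::'m set). L * \<bar>\<gamma>c2 k\<bar>)" .
    qed
    finally show ?thesis unfolding hb_def .
  qed
  have tp: "\<bar>transpose (projP gc x) $ i $ j\<bar> \<le> 2" for x i j
    by (simp add: transpose_def projP_entry)
  show ?thesis
  proof (intro exI[of _ "max 0 G"] conjI ballI)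
    fix x assume x: "x \<in> \<Omega>"
    have m1: "\<bar>(transpose (projP gc x) ** lag_hess Hf Hc x (lam x)) $ i $ j\<bar> \<le> e1" for i j
      unfolding e1_def by (rule mult_entry_bound[OF tp hess[OF x]])
    have m2: "\<bar>(transpose (projP gc x) ** lag_hess Hf Hc x (lam x) ** projP gc x) $ i $ j\<bar> \<le> e2" for i j
      unfolding e2_def by (rule mult_entry_bound[OF m1 projP_entry])
    have "specnorm (projH Hf gc Hc lam x) \<le> G"
      unfolding projH_def specnorm_def G_def by (rule onorm_le_matrix_component[OF m2])
    then show "specnorm (projH Hf gc Hc lam x) \<le> max 0 G" by linarith
  qed simp
qed

end
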